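(* Let $G$ and $H$ be graphs with $|V(G)|\ge2$, and let $S\subseteq E(G\times H)$. Define the graph $G^*$ as follows: <ul> <li>its vertex set is the set of $H$-fibers $\{{}_xH: x\in V(G)\}$;</li> <li>two distinct fibers ${}_xH$ and ${}_yH$ are adjacent if and only if $G\times H-S$ contains at least one edge with one end in ${}_xH$ and the other end in ${}_yH$.</li> </ul> If $G^*$ is disconnected, then one of the following holds: <ol> <li>$|S|>2\kappa'(G)e(H)$;</li> <li>$|S|=2\kappa'(G)e(H)$ and $S$ is the set induced by some minimum edge cut of $G$.</li> </ol>
   Context: All graphs are finite, simple and undirected. $e(H)=|E(H)|$. The direct product $G\times H$ has vertex set $V(G)\times V(H)$. Two vertices $(x,u),(y,v)$ are adjacent if and only if $xy\in E(G)$ and $uv\in E(H)$. For $x\in V(G)$, the $H$-fiber is ${}_xH=\{(x,u):u\in V(H)\}$. For a graph $G$ with at least two vertices, an edge cut is the set $E(X,Y)$ of all edges joining $X$ and $Y$, for a partition $(X,Y)$ of $V(G)$ into nonempty parts. $\kappa'(G)$ is the minimum size of an edge cut, and a minimum edge cut is an edge cut of that size. For $S_0\subseteq E(G)$, the set induced by $S_0$ is $\{(x,u)(y,v),(x,v)(y,u): xy\in S_0,\ uv\in E(H)\}$. *)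

theory Defs
  imports Main
begin

text \<open>A finite simple graph: a pair (V, E) with E a set of 2-element subsets of V.\<close>
type_synonym 'a graph = "'a set \<times> 'a set set"

definition verts :: "'a graph \<Rightarrow> 'a set" where "verts G = fst G"
definition edges :: "'a graph \<Rightarrow> 'a set set" where "edges G = snd G"

definition graph :: "'a graph \<Rightarrow> bool" where
  "graph G \<longleftrightarrow> finite (verts G) \<and>
     (\<forall>e\<in>edges G. \<exists>x y. x \<in> verts G \<and> y \<in> verts G \<and> x \<noteq> y \<and> e = {x, y})"

definition dprod :: "'a graph \<Rightarrow> 'b graph \<Rightarrow> ('a \<times> 'b) graph" where
  "dprod G H = (verts G \<times> verts H,
     {{(x,u),(y,v)} | x y u v. {x,y} \<in> edges G \<and> {u,v} \<in> edges H})"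

definition fiber :: "'a \<Rightarrow> 'b graph \<Rightarrow> ('a \<times> 'b) set" where
  "fiber x H = {(x,u) | u. u \<in> verts H}"

definition edges_between :: "'a graph \<Rightarrow> 'a set \<Rightarrow> 'a set \<Rightarrow> 'a set set" where
  "edges_between G X Y = {e \<in> edges G. \<exists>x\<in>X. \<exists>y\<in>Y. e = {x,y}}"

definition is_edge_cut :: "'a graph \<Rightarrow> 'a set set \<Rightarrow> bool" where
  "is_edge_cut G C \<longleftrightarrow> (\<exists>X Y. X \<noteq> {} \<and> Y \<noteq> {} \<and> X \<union> Y = verts G \<and> X \<inter> Y = {}
       \<and> C = edges_between G X Y)"

definition edge_conn :: "'a graph \<Rightarrow> nat" where
  "edge_conn G = Min (card ` {C. is_edge_cut G C})"

definition is_min_edge_cut :: "'a graph \<Rightarrow> 'a set set \<Rightarrow> bool" where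
  "is_min_edge_cut G C \<longleftrightarrow> is_edge_cut G C \<and> card C = edge_conn G"

definition induced_set :: "'a set set \<Rightarrow> 'b graph \<Rightarrow> ('a \<times> 'b) set set" where
  "induced_set S0 H = {{(x,u),(y,v)} | x y u v. {x,y} \<in> S0 \<and> {u,v} \<in> edges H}
                    \<union> {{(x,v),(y,u)} | x y u v. {x,y} \<in> S0 \<and> {u,v} \<in> edges H}"

definition fiber_graph :: "'a graph \<Rightarrow> 'b graph \<Rightarrow> ('a \<times> 'b) set set \<Rightarrow> ('a \<times> 'b) set graph" where
  "fiber_graph G H S = ((\<lambda>x. fiber x H) ` verts G,
     {{F1, F2} | F1 F2. F1 \<in> (\<lambda>x. fiber x H) ` verts G \<and> F2 \<in> (\<lambda>x. fiber x H) ` verts G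
        \<and> F1 \<noteq> F2 \<and> (\<exists>a\<in>F1. \<exists>b\<in>F2. {a,b} \<in> edges (dprod G H) - S)})"

definition connected :: "'a graph \<Rightarrow> bool" where
  "connected G \<longleftrightarrow> (\<forall>a\<in>verts G. \<forall>b\<in>verts G.
      (a, b) \<in> {(x, y). {x, y} \<in> edges G}\<^sup>*)"

end

theory Submission
  imports Defs
begin

lemma graph_edgeD:
  assumes "graph G" "{u,v} \<in> edges G"
  shows "u \<in> verts G \<and> v \<in> verts G \<and> u \<noteq> v"
proof -
  have "\<forall>e\<in>edges G. \<exists>x y. x \<in> verts G \<and> y \<in> verts G \<and> x \<noteq> y \<and> e = {x, y}"
    using assms(1) unfolding graph_def by (rule conjunct2)
  then obtain x y where xy: "x \<in> verts G" "y \<in> verts G" "x \<noteq> y" and eq: "{u,v} = {x,y}"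
    using assms(2) by metis
  have "u \<in> {x,y}" "v \<in> {x,y}" using eq by (metis insertI1, metis insertI1 insert_commute)
  then have 1: "u \<in> verts G" "v \<in> verts G" using xy by auto
  have "u \<noteq> v"
  proof
    assume "u = v"
    then have "{x,y} = {u}" using eq by simp
    then have "x = u" "y = u" by (metis insertI1 singletonD, metis insertI1 insert_commute singletonD)
    then show False using xy(3) by simp
  qed
  then show ?thesis using 1 by simp
qed

lemma graph_finite_edges:
  assumes "graph G" shows "finite (edges G)"
proof -
  have "edges G \<subseteq> Pow (verts G)"
  proof
    fix e assume e: "e \<in> edges G"
    have "\<forall>e\<in>edges G. \<exists>x y. x \<in> verts G \<and> y \<in> verts G \<and> x \<noteq> y \<and> e = {x, y}"
      using assms(1) unfolding graph_def by (rule conjunct2)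
    then obtain x y where "x \<in> verts G" "y \<in> verts G" "e = {x,y}" using e by metis
    then show "e \<in> Pow (verts G)" by simp
  qed
  moreover have "finite (verts G)" using assms unfolding graph_def by (rule conjunct1)
  ultimately show ?thesis by (meson finite_Pow_iff finite_subset)
qed

lemma pairs_of_edge:
  "{(u,v). {u,v} = {x,y}} = {(x,y),(y,x)}"
proof (rule set_eqI)
  fix p :: "'a \<times> 'a"
  obtain u v where p: "p = (u,v)" by (cases p)
  have "p \<in> {(u,v). {u,v} = {x,y}} \<longleftrightarrow> {u,v} = {x,y}" using p by simp
  also have "\<dots> \<longleftrightarrow> (u = x \<and> v = y \<or> u = y \<and> v = x)" by (rule doubleton_eq_iff)
  also have "\<dots> \<longleftrightarrow> p \<in> {(x,y),(y,x)}" using p by simp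
  finally show "p \<in> {(u,v). {u,v} = {x,y}} \<longleftrightarrow> p \<in> {(x,y),(y,x)}" .
qed

lemma card_orient:
  assumes "graph H"
  shows "card {(u,v). {u,v} \<in> edges H} = 2 * card (edges H)"
proof -
  have fin: "finite (edges H)" using graph_finite_edges[OF assms] .
  have eq: "{(u,v). {u,v} \<in> edges H} = (\<Union>e\<in>edges H. {(u,v). {u,v} = e})"
    by (rule set_eqI) blast
  have pe: "\<exists>x y. x \<noteq> y \<and> {(u,v). {u,v} = e} = {(x,y),(y,x)}" if eH: "e \<in> edges H" for e
  proof -
    have "\<forall>e\<in>edges H. \<exists>x y. x \<in> verts H \<and> y \<in> verts H \<and> x \<noteq> y \<and> e = {x, y}"
      using assms(1) unfolding graph_def by (rule conjunct2)
    then obtain x y where "x \<noteq> y" "e = {x,y}" using eH by metis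
    then have "{(u,v). {u,v} = e} = {(x,y),(y,x)}" using pairs_of_edge[of x y] by simp
    then show ?thesis using \<open>x \<noteq> y\<close> by blast
  qed
  have c2: "card {(u,v). {u,v} = e} = 2" if eH: "e \<in> edges H" for e
  proof -
    obtain x y where "x \<noteq> y" "{(u,v). {u,v} = e} = {(x,y),(y,x)}" using pe[OF eH] by blast
    then show ?thesis by simp
  qed
  have fin2: "finite {(u,v). {u,v} = e}" if eH: "e \<in> edges H" for e
  proof -
    obtain x y where "x \<noteq> y" "{(u,v). {u,v} = e} = {(x,y),(y,x)}" using pe[OF eH] by blast
    then show ?thesis by simp
  qed
  have disj: "\<forall>i\<in>edges H. \<forall>j\<in>edges H. i \<noteq> j \<longrightarrow>
      {(u,v). {u,v} = i} \<inter> {(u,v). {u,v} = j} = {}" by blast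
  have f2: "\<forall>e\<in>edges H. finite {(u,v). {u,v} = e}" using fin2 by blast
  have "card (\<Union>e\<in>edges H. {(u,v). {u,v} = e}) = (\<Sum>e\<in>edges H. card {(u,v). {u,v} = e})"
    by (rule card_UN_disjoint[OF fin f2 disj])
  also have "\<dots> = (\<Sum>e\<in>edges H. 2)" using c2 by simp
  finally show ?thesis using eq by simp
qed

lemma edges_pair: "edges (a,b) = b" by (simp add: edges_def)

theorem lemma1:
  fixes G :: "'a graph" and H :: "'b graph" and S :: "('a \<times> 'b) set set"
  assumes "graph G" and "graph H" and "card (verts G) \<ge> 2"
    and "S \<subseteq> edges (dprod G H)"
    and "\<not> connected (fiber_graph G H S)"
  shows "card S > 2 * edge_conn G * card (edges H)
      \<or> (card S = 2 * edge_conn G * card (edges H)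
          \<and> (\<exists>S0. is_min_edge_cut G S0 \<and> S = induced_set S0 H))"
proof -
  define FG where "FG = fiber_graph G H S"
  define R where "R = {(x, y). {x, y} \<in> edges FG}"
  define V where "V = verts G"
  have finV: "finite V" using assms(1) unfolding graph_def V_def by blast
  have finVH: "finite (verts H)" using assms(2) unfolding graph_def by blast
  have finEG: "finite (edges G)" using graph_finite_edges[OF assms(1)] .
  have finEH: "finite (edges H)" using graph_finite_edges[OF assms(2)] .
  obtain a b where ab: "a \<in> verts FG" "b \<in> verts FG" "(a,b) \<notin> R\<^sup>*"
    using assms(5) unfolding connected_def FG_def R_def by blast
  have vFG: "verts FG = (\<lambda>x. fiber x H) ` V"
    unfolding FG_def fiber_graph_def verts_def V_def by simp
  obtain x0 where x0: "x0 \<in> V" "a = fiber x0 H" using ab(1) vFG by auto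
  obtain y0 where y0: "y0 \<in> V" "b = fiber y0 H" using ab(2) vFG by auto
  define X where "X = {x \<in> V. (a, fiber x H) \<in> R\<^sup>*}"
  define Y where "Y = V - X"
  have x0X: "x0 \<in> X" using x0 unfolding X_def by auto
  have y0Y: "y0 \<in> Y" using y0 ab(3) unfolding Y_def X_def by auto
  have XV: "X \<subseteq> V" unfolding X_def by auto
  have key: "{(x,u),(y,v)} \<in> S"
    if "x \<in> X" "y \<in> Y" "{x,y} \<in> edges G" "{u,v} \<in> edges H" for x y u v
  proof (rule ccontr)
    assume nS: "{(x,u),(y,v)} \<notin> S"
    have ed: "{(x,u),(y,v)} \<in> edges (dprod G H)"
      unfolding dprod_def edges_pair mem_Collect_eq
      by (rule exI[of _ x], rule exI[of _ y], rule exI[of _ u], rule exI[of _ v]) (intro conjI refl that(3,4))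
    have uv: "u \<in> verts H" "v \<in> verts H" using graph_edgeD[OF assms(2) that(4)] by auto
    have yV: "y \<in> V" using that(2) unfolding Y_def by auto
    have xV: "x \<in> V" using that(1) XV by auto
    have reachx: "(a, fiber x H) \<in> R\<^sup>*" using that(1) unfolding X_def by auto
    have ne: "fiber x H \<noteq> fiber y H"
    proof
      assume "fiber x H = fiber y H"
      then have "y \<in> X" using reachx yV unfolding X_def by auto
      then show False using that(2) unfolding Y_def by auto
    qed
    have m1: "fiber x H \<in> (\<lambda>x. fiber x H) ` verts G" "fiber y H \<in> (\<lambda>x. fiber x H) ` verts G"
      using xV yV unfolding V_def by blast+
    have m2: "(x,u) \<in> fiber x H" "(y,v) \<in> fiber y H" unfolding fiber_def using uv by blast+
    have m3: "{(x,u),(y,v)} \<in> edges (dprod G H) - S" using ed nS by blast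
    have ex: "\<exists>a\<in>fiber x H. \<exists>b\<in>fiber y H. {a,b} \<in> edges (dprod G H) - S"
      using m2 m3 by blast
    have "{fiber x H, fiber y H} \<in> edges FG"
      unfolding FG_def fiber_graph_def edges_pair mem_Collect_eq
      by (rule exI[of _ "fiber x H"], rule exI[of _ "fiber y H"]) (intro conjI refl m1 ne ex)
    then have "(fiber x H, fiber y H) \<in> R" unfolding R_def by auto
    then have "(a, fiber y H) \<in> R\<^sup>*" using reachx by auto
    then have "y \<in> X" using yV unfolding X_def by auto
    then show False using that(2) unfolding Y_def by auto
  qed
  define C where "C = edges_between G X Y"
  define P where "P = {(x,y). x \<in> X \<and> y \<in> Y \<and> {x,y} \<in> edges G}"
  define D where "D = {(u,v). {u,v} \<in> edges H}"
  define f where "f = (\<lambda>((x::'a,y::'a),(u::'b,v::'b)). {(x,u),(y,v)})"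
  define T where "T = f ` (P \<times> D)"
  have XY: "X \<inter> Y = {}" unfolding Y_def by auto
  have finP: "finite P"
  proof -
    have "P \<subseteq> V \<times> V" unfolding P_def Y_def using XV by auto
    then show ?thesis using finV finite_subset by blast
  qed
  have finD: "finite D"
  proof -
    have "D \<subseteq> verts H \<times> verts H" unfolding D_def using graph_edgeD[OF assms(2)] by auto
    then show ?thesis using finVH finite_subset by blast
  qed
  have cardD: "card D = 2 * card (edges H)" unfolding D_def using card_orient[OF assms(2)] .
  have injf: "inj_on f (P \<times> D)"
  proof (rule inj_onI)
    fix p q assume p: "p \<in> P \<times> D" and q: "q \<in> P \<times> D" and e: "f p = f q"
    obtain x y u v where pp: "p = ((x,y),(u,v))" by (metis prod.collapse)
    obtain x' y' u' v' where qq: "q = ((x',y'),(u',v'))" by (metis prod.collapse)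
    have "x \<in> X" "y \<in> Y" "x' \<in> X" "y' \<in> Y" using p q pp qq unfolding P_def by auto
    moreover have "{(x,u),(y,v)} = {(x',u'),(y',v')}" using e pp qq unfolding f_def by simp
    ultimately show "p = q" using XY pp qq by (auto simp: doubleton_eq_iff)
  qed
  have cardT: "card T = card P * card D"
    unfolding T_def using card_image[OF injf] card_cartesian_product by metis
  have CP: "C = (\<lambda>(x,y). {x,y}) ` P"
    unfolding C_def P_def edges_between_def by auto
  have injP: "inj_on (\<lambda>(x,y). {x,y}) P"
  proof (rule inj_onI)
    fix p q assume p: "p \<in> P" and q: "q \<in> P" and e: "(\<lambda>(x,y). {x,y}) p = (\<lambda>(x,y). {x,y}) q"
    obtain x y where pp: "p = (x,y)" by (metis prod.collapse)
    obtain x' y' where qq: "q = (x',y')" by (metis prod.collapse)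
    have "x \<in> X" "y \<in> Y" "x' \<in> X" "y' \<in> Y" using p q pp qq unfolding P_def by auto
    moreover have "{x,y} = {x',y'}" using e pp qq by simp
    ultimately show "p = q" using XY pp qq by (auto simp: doubleton_eq_iff)
  qed
  have cardC: "card C = card P" using CP card_image[OF injP] by simp
  have TS: "T \<subseteq> S" unfolding T_def f_def P_def D_def using key by auto
  have finS: "finite S"
  proof -
    have "edges (dprod G H) \<subseteq> Pow (V \<times> verts H)"
    proof
      fix e assume "e \<in> edges (dprod G H)"
      then have "\<exists>x y u v. e = {(x,u),(y,v)} \<and> {x,y} \<in> edges G \<and> {u,v} \<in> edges H"
        by (simp only: dprod_def edges_pair mem_Collect_eq)
      then obtain x y u v where e: "e = {(x,u),(y,v)}" "{x,y} \<in> edges G" "{u,v} \<in> edges H"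
        by blast
      have "x \<in> V" "y \<in> V" using graph_edgeD[OF assms(1) e(2)] unfolding V_def by blast+
      moreover have "u \<in> verts H" "v \<in> verts H" using graph_edgeD[OF assms(2) e(3)] by blast+
      ultimately show "e \<in> Pow (V \<times> verts H)" using e(1) by blast
    qed
    then show ?thesis using assms(4) finV finVH
      by (meson finite_Pow_iff finite_SigmaI finite_subset)
  qed
  have cutC: "is_edge_cut G C"
  proof -
    have "X \<union> Y = verts G" using XV unfolding Y_def V_def by auto
    then show ?thesis unfolding is_edge_cut_def C_def using x0X y0Y XY by blast
  qed
  define K where "K = card ` {C. is_edge_cut G C}"
  have finK: "finite K"
  proof -
    have "{C. is_edge_cut G C} \<subseteq> Pow (edges G)"
      unfolding is_edge_cut_def edges_between_def by auto
    then show ?thesis unfolding K_def using finEG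
      by (meson finite_Pow_iff finite_imageI finite_subset)
  qed
  have ecle: "edge_conn G \<le> card C"
    unfolding edge_conn_def using finK cutC unfolding K_def by auto
  have indT: "induced_set C H = T"
  proof
    show "induced_set C H \<subseteq> T"
    proof
      fix z assume "z \<in> induced_set C H"
      then obtain x y u v where xy: "{x,y} \<in> C" "{u,v} \<in> edges H"
        and z: "z = {(x,u),(y,v)} \<or> z = {(x,v),(y,u)}"
        unfolding induced_set_def by blast
      obtain x' y' where "x' \<in> X" "y' \<in> Y" "{x,y} = {x',y'}" "{x,y} \<in> edges G"
        using xy(1) unfolding C_def edges_between_def by blast
      then have "(x,y) \<in> P \<or> (y,x) \<in> P" unfolding P_def by (auto simp: doubleton_eq_iff insert_commute)
      moreover have "(u,v) \<in> D" "(v,u) \<in> D" using xy(2) unfolding D_def by (auto simp: insert_commute)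
      moreover have fT: "{(a,c),(b,d)} \<in> T" if "(a,b) \<in> P" "(c,d) \<in> D" for a b c d
      proof -
        have "f ((a,b),(c,d)) \<in> T" unfolding T_def using that by blast
        then show ?thesis unfolding f_def by simp
      qed
      ultimately show "z \<in> T" using z
      proof (elim disjE)
        assume "(x,y) \<in> P" "(u,v) \<in> D" "z = {(x,u),(y,v)}" then show ?thesis using fT by simp
      next
        assume "(x,y) \<in> P" "(v,u) \<in> D" "z = {(x,v),(y,u)}" then show ?thesis using fT by simp
      next
        assume a: "(y,x) \<in> P" "(v,u) \<in> D" "z = {(x,u),(y,v)}"
        have "z = {(y,v),(x,u)}" using a(3) by (simp add: insert_commute)
        then show ?thesis using fT a by simp
      next
        assume a: "(y,x) \<in> P" "(u,v) \<in> D" "z = {(x,v),(y,u)}"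
        have "z = {(y,u),(x,v)}" using a(3) by (simp add: insert_commute)
        then show ?thesis using fT a by simp
      qed
    qed
  next
    show "T \<subseteq> induced_set C H"
    proof
      fix z assume "z \<in> T"
      then obtain x y u v where "(x,y)\<in>P" "(u,v)\<in>D" "z = {(x,u),(y,v)}"
        unfolding T_def f_def by auto
      then show "z \<in> induced_set C H"
        unfolding induced_set_def C_def P_def D_def edges_between_def by blast
    qed
  qed
  show ?thesis
  proof (cases "card S > 2 * edge_conn G * card (edges H)")
    case True then show ?thesis by simp
  next
    case False
    have "card T = 2 * card C * card (edges H)" using cardT cardD cardC by simp
    moreover have "card T \<le> card S" using TS finS card_mono by blast
    moreover have "2 * edge_conn G * card (edges H) \<le> 2 * card C * card (edges H)"
      using ecle by simp
    ultimately have eqc: "card S = card T" "card S = 2 * edge_conn G * card (edges H)"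
      using False by linarith+
    have ST: "S = T" using card_subset_eq[OF finS TS] eqc(1) by simp
    show ?thesis
    proof (cases "edges H = {}")
      case True
      have "K \<noteq> {}" unfolding K_def using cutC by auto
      then have "edge_conn G \<in> K" unfolding edge_conn_def K_def[symmetric] using finK by simp
      then obtain S0 where "is_edge_cut G S0" "card S0 = edge_conn G" unfolding K_def by auto
      moreover have "induced_set S0 H = {}" "induced_set C H = {}"
        using True unfolding induced_set_def by auto
      ultimately show ?thesis using eqc ST indT unfolding is_min_edge_cut_def by auto
    next
      case False
      then have "card (edges H) > 0" using finEH by auto
      then have "card C = edge_conn G" using eqc \<open>card T = 2 * card C * card (edges H)\<close> by simp
      then show ?thesis using cutC eqc ST indT unfolding is_min_edge_cut_def by auto
    qed
  qed
qed

end
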